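(* Let $G$ be a finite group. Then the non-inverse graph $\Gamma_{NI}(G)$ is minimally connected if and only if either every non-identity element of $G$ is self-inverse, or no non-identity element of $G$ is self-inverse.
   Context: The non-inverse graph $\Gamma_{NI}(G)$ of a group $G$ is the simple undirected graph with vertex set $G$ in which two distinct elements $x,y$ are adjacent if and only if $y\neq x^{-1}$. An element $x$ is self-inverse if $x=x^{-1}$. For a connected graph $\Gamma$, a vertex cut-set is a set $S$ of vertices such that $\Gamma-S$ is disconnected or has just one vertex, and the vertex connectivity $\kappa(\Gamma)$ is the smallest size of a vertex cut-set. $\Gamma$ is minimally connected if $\kappa(\Gamma-\epsilon)=\kappa(\Gamma)-1$ for every edge $\epsilon$ of $\Gamma$. *)

theory Defs
  imports "HOL-Algebra.Group"
begin

text \<open>Simple undirected graphs given by a vertex set V and a symmetric,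
irreflexive adjacency relation E (only its restriction to V matters).\<close>

definition reachable :: "'a set \<Rightarrow> ('a \<Rightarrow> 'a \<Rightarrow> bool) \<Rightarrow> 'a \<Rightarrow> 'a \<Rightarrow> bool" where
  "reachable V E x y \<longleftrightarrow> (\<lambda>a b. a \<in> V \<and> b \<in> V \<and> E a b)\<^sup>*\<^sup>* x y"

definition graph_connected :: "'a set \<Rightarrow> ('a \<Rightarrow> 'a \<Rightarrow> bool) \<Rightarrow> bool" where
  "graph_connected V E \<longleftrightarrow> V \<noteq> {} \<and> (\<forall>x\<in>V. \<forall>y\<in>V. reachable V E x y)"

definition graph_disconnected :: "'a set \<Rightarrow> ('a \<Rightarrow> 'a \<Rightarrow> bool) \<Rightarrow> bool" where
  "graph_disconnected V E \<longleftrightarrow> (\<exists>x\<in>V. \<exists>y\<in>V. \<not> reachable V E x y)"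

definition vertex_cut_set :: "'a set \<Rightarrow> ('a \<Rightarrow> 'a \<Rightarrow> bool) \<Rightarrow> 'a set \<Rightarrow> bool" where
  "vertex_cut_set V E S \<longleftrightarrow> S \<subseteq> V \<and> (graph_disconnected (V - S) E \<or> card (V - S) = 1)"

definition vertex_connectivity :: "'a set \<Rightarrow> ('a \<Rightarrow> 'a \<Rightarrow> bool) \<Rightarrow> nat" where
  "vertex_connectivity V E = (LEAST k. \<exists>S. vertex_cut_set V E S \<and> card S = k)"

definition is_edge :: "'a set \<Rightarrow> ('a \<Rightarrow> 'a \<Rightarrow> bool) \<Rightarrow> 'a \<Rightarrow> 'a \<Rightarrow> bool" where
  "is_edge V E a b \<longleftrightarrow> a \<in> V \<and> b \<in> V \<and> a \<noteq> b \<and> E a b"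

definition delete_edge :: "('a \<Rightarrow> 'a \<Rightarrow> bool) \<Rightarrow> 'a \<Rightarrow> 'a \<Rightarrow> ('a \<Rightarrow> 'a \<Rightarrow> bool)" where
  "delete_edge E a b = (\<lambda>x y. E x y \<and> {x, y} \<noteq> {a, b})"

definition minimally_connected :: "'a set \<Rightarrow> ('a \<Rightarrow> 'a \<Rightarrow> bool) \<Rightarrow> bool" where
  "minimally_connected V E \<longleftrightarrow> graph_connected V E \<and>
     (\<forall>a b. is_edge V E a b \<longrightarrow>
        vertex_connectivity V (delete_edge E a b) = vertex_connectivity V E - 1)"

definition non_inverse_adj :: "('a, 'b) monoid_scheme \<Rightarrow> 'a \<Rightarrow> 'a \<Rightarrow> bool" where
  "non_inverse_adj G x y \<longleftrightarrow> x \<noteq> y \<and> y \<noteq> inv\<^bsub>G\<^esub> x"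

end

theory Submission
  imports Defs
begin

lemma reach_refl: "reachable W E x x"
  by (simp add: reachable_def)

lemma reach_edge: "x \<in> W \<Longrightarrow> y \<in> W \<Longrightarrow> E x y \<Longrightarrow> reachable W E x y"
  by (auto simp: reachable_def)

lemma reach_trans: "reachable W E x y \<Longrightarrow> reachable W E y z \<Longrightarrow> reachable W E x z"
  unfolding reachable_def by (rule rtranclp_trans)

lemma reach_common: "x \<in> W \<Longrightarrow> y \<in> W \<Longrightarrow> z \<in> W \<Longrightarrow> E x z \<Longrightarrow> E z y \<Longrightarrow> reachable W E x y"
  by (meson reach_edge reach_trans)

lemma disc_isolated:
  assumes "x \<in> W" "y \<in> W" "x \<noteq> y" "\<forall>c\<in>W. \<not> E x c"
  shows "graph_disconnected W E"
proof -
  have "\<not> reachable W E x y"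
  proof
    assume "reachable W E x y"
    then have "(\<lambda>a b. a \<in> W \<and> b \<in> W \<and> E a b)\<^sup>*\<^sup>* x y" by (simp add: reachable_def)
    then show False
      by (rule converse_rtranclpE) (use assms in auto)
  qed
  then show ?thesis using assms unfolding graph_disconnected_def by blast
qed

lemma pick:
  assumes "finite W" "finite F" "card F < card W"
  obtains z where "z \<in> W" "z \<notin> F"
proof -
  have "\<not> W \<subseteq> F"
  proof
    assume "W \<subseteq> F" then have "card W \<le> card F" using assms card_mono by blast
    then show False using assms by simp
  qed
  then show ?thesis using that by blast
qed

lemma card_le3: "card {x, y, z} \<le> 3"
  by (simp add: card_insert_if)

lemma card_le2: "card {x, y} \<le> 2"
  by (simp add: card_insert_if)

lemma vc_eq:
  assumes fin: "finite V" and W0: "W0 \<subseteq> V" "card W0 = c" "graph_disconnected W0 E \<or> c = 1"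
    and c1: "c \<ge> 1"
    and conn: "\<And>W. W \<subseteq> V \<Longrightarrow> c < card W \<Longrightarrow> \<not> graph_disconnected W E"
  shows "vertex_connectivity V E = card V - c"
  unfolding vertex_connectivity_def
proof (rule Least_equality)
  have "V - (V - W0) = W0" using W0 by blast
  moreover have "card (V - W0) = card V - c" using W0 fin
    by (simp add: card_Diff_subset finite_subset)
  ultimately have "vertex_cut_set V E (V - W0) \<and> card (V - W0) = card V - c"
    using W0(2,3) unfolding vertex_cut_set_def by simp
  then show "\<exists>S. vertex_cut_set V E S \<and> card S = card V - c" by blast
next
  fix k assume "\<exists>S. vertex_cut_set V E S \<and> card S = k"
  then obtain S where S: "S \<subseteq> V" "graph_disconnected (V - S) E \<or> card (V - S) = 1" "card S = k"
    unfolding vertex_cut_set_def by blast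
  have cw: "card (V - S) = card V - k" using S fin by (simp add: card_Diff_subset finite_subset)
  have kle: "k \<le> card V" using S fin card_mono by blast
  show "card V - c \<le> k"
  proof (rule ccontr)
    assume "\<not> card V - c \<le> k"
    then have "c < card (V - S)" using cw kle by linarith
    then show False using conn[of "V - S"] S c1 by auto
  qed
qed

context group
begin

lemma inv_eq_swap: "x \<in> carrier G \<Longrightarrow> y \<in> carrier G \<Longrightarrow> (y = inv x) \<longleftrightarrow> (x = inv y)"
  by (metis inv_inv)

lemma L1:
  assumes "W \<subseteq> carrier G" "finite W" "3 \<le> card W" "x \<in> W" "y \<in> W"
  shows "reachable W (non_inverse_adj G) x y"
proof (cases "x = y \<or> non_inverse_adj G x y")
  case True then show ?thesis using assms by (meson reach_edge reach_refl)
next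
  case False
  then have xy: "x \<noteq> y" "y = inv x" by (auto simp: non_inverse_adj_def)
  have cxy: "card {x, y} < card W" using assms(3) card_le2[of x y] by linarith
  obtain z where z: "z \<in> W" "z \<notin> {x, y}" using pick[OF assms(2) _ cxy] by (simp; blast)
  have xc: "x \<in> carrier G" "y \<in> carrier G" "z \<in> carrier G" using assms z by auto
  have "non_inverse_adj G x z" using z xy by (auto simp: non_inverse_adj_def)
  moreover have "non_inverse_adj G z y" using z xy xc inv_eq_swap[of z y]
    by (auto simp: non_inverse_adj_def)
  ultimately show ?thesis using reach_common assms z by metis
qed


lemma L2:
  assumes W: "W \<subseteq> carrier G" "finite W" "3 \<le> card W" "x \<in> W" "y \<in> W"
    and ab: "a \<noteq> b" "inv a = a" "inv b = b" "a \<in> carrier G" "b \<in> carrier G"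
  shows "reachable W (delete_edge (non_inverse_adj G) a b) x y"
proof (cases "x = y \<or> delete_edge (non_inverse_adj G) a b x y")
  case True then show ?thesis using W by (meson reach_edge reach_refl)
next
  case False
  then have xy: "x \<noteq> y" "y = inv x \<or> {x, y} = {a, b}"
    by (auto simp: delete_edge_def non_inverse_adj_def)
  have cxy: "card {x, y} < card W" using W(3) card_le2[of x y] by linarith
  obtain z where z: "z \<in> W" "z \<notin> {x, y}" using pick[OF W(2) _ cxy] by (simp; blast)
  have xc: "x \<in> carrier G" "y \<in> carrier G" "z \<in> carrier G" using W z by auto
  have s1: "(z = inv x) \<longleftrightarrow> (x = inv z)" "(y = inv z) \<longleftrightarrow> (z = inv y)" "(y = inv x) \<longleftrightarrow> (x = inv y)"
    using inv_eq_swap xc by auto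
  have "delete_edge (non_inverse_adj G) a b x z"
    using z xy ab s1 by (auto simp: delete_edge_def non_inverse_adj_def doubleton_eq_iff)
  moreover have "delete_edge (non_inverse_adj G) a b z y"
    using z xy ab s1 by (auto simp: delete_edge_def non_inverse_adj_def doubleton_eq_iff)
  ultimately show ?thesis using reach_common W z by metis
qed

lemma L3a:
  assumes W: "W \<subseteq> carrier G" "finite W" "4 \<le> card W" "x \<in> W" "y \<in> W"
    and xy0: "x \<noteq> y" "{x, y} \<noteq> {a, b}"
    and ab: "a \<noteq> b" "b \<noteq> inv a" "a \<in> carrier G" "b \<in> carrier G"
  shows "reachable W (delete_edge (non_inverse_adj G) a b) x y"
proof (cases "delete_edge (non_inverse_adj G) a b x y")
  case True then show ?thesis using W by (meson reach_edge)
next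
  case False
  then have xy: "y = inv x"
    using xy0 by (auto simp: delete_edge_def non_inverse_adj_def)
  define c where "c = (if x = a then b else if x = b then a else if y = a then b else if y = b then a else x)"
  have cxy: "card {x, y, c} < card W" using W(3) card_le3[of x y c] by linarith
  obtain z where z: "z \<in> W" "z \<notin> {x, y, c}" using pick[OF W(2) _ cxy] by (simp; blast)
  have xc: "x \<in> carrier G" "y \<in> carrier G" "z \<in> carrier G" using W z by auto
  have s1: "(z = inv x) \<longleftrightarrow> (x = inv z)" "(y = inv z) \<longleftrightarrow> (z = inv y)" "(y = inv x) \<longleftrightarrow> (x = inv y)"
    using inv_eq_swap xc by auto
  have "delete_edge (non_inverse_adj G) a b x z"
    using z xy xy0 ab s1 by (auto simp: delete_edge_def non_inverse_adj_def doubleton_eq_iff c_def)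
  moreover have "delete_edge (non_inverse_adj G) a b z y"
    using z xy xy0 ab s1 by (auto simp: delete_edge_def non_inverse_adj_def doubleton_eq_iff c_def)
  ultimately show ?thesis using reach_common W z by metis
qed

lemma L3:
  assumes W: "W \<subseteq> carrier G" "finite W" "4 \<le> card W" "x \<in> W" "y \<in> W"
    and ab: "a \<noteq> b" "b \<noteq> inv a" "a \<in> carrier G" "b \<in> carrier G"
  shows "reachable W (delete_edge (non_inverse_adj G) a b) x y"
proof (cases "x = y")
  case True then show ?thesis by (simp add: reach_refl)
next
  case ne: False
  show ?thesis
  proof (cases "{x, y} = {a, b}")
    case False then show ?thesis using L3a assms ne by blast
  next
    case True
    have cxy: "card {a, b} < card W" using W(3) card_le2[of a b] by linarith
    obtain z where z: "z \<in> W" "z \<notin> {a, b}" using pick[OF W(2) _ cxy] by (simp; blast)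
    have "reachable W (delete_edge (non_inverse_adj G) a b) x z"
      by (rule L3a) (use assms z True in \<open>auto simp: doubleton_eq_iff\<close>)
    moreover have "reachable W (delete_edge (non_inverse_adj G) a b) z y"
      by (rule L3a) (use assms z True in \<open>auto simp: doubleton_eq_iff\<close>)
    ultimately show ?thesis by (rule reach_trans)
  qed
qed

lemma K_G_all:
  assumes fin: "finite (carrier G)" and all: "\<forall>x\<in>carrier G. inv x = x"
  shows "vertex_connectivity (carrier G) (non_inverse_adj G) = card (carrier G) - 1"
proof (rule vc_eq[OF fin, of "{\<one>}"])
  show "\<And>W. W \<subseteq> carrier G \<Longrightarrow> 1 < card W \<Longrightarrow> \<not> graph_disconnected W (non_inverse_adj G)"
  proof -
    fix W assume W: "W \<subseteq> carrier G"
    have "reachable W (non_inverse_adj G) x y" if "x \<in> W" "y \<in> W" for x y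
    proof (cases "x = y")
      case True then show ?thesis by (simp add: reach_refl)
    next
      case False then show ?thesis using that W all
        by (intro reach_edge) (auto simp: non_inverse_adj_def)
    qed
    then show "\<not> graph_disconnected W (non_inverse_adj G)"
      unfolding graph_disconnected_def by blast
  qed
qed auto

lemma K_G_some:
  assumes fin: "finite (carrier G)" and x0: "x0 \<in> carrier G" "x0 \<noteq> inv x0"
  shows "vertex_connectivity (carrier G) (non_inverse_adj G) = card (carrier G) - 2"
proof (rule vc_eq[OF fin, of "{x0, inv x0}"])
  show "graph_disconnected {x0, inv x0} (non_inverse_adj G) \<or> 2 = 1"
    by (rule disjI1, rule disc_isolated[of x0 _ "inv x0"]) (use x0 in \<open>auto simp: non_inverse_adj_def\<close>)
  show "\<And>W. W \<subseteq> carrier G \<Longrightarrow> 2 < card W \<Longrightarrow> \<not> graph_disconnected W (non_inverse_adj G)"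
    unfolding graph_disconnected_def using L1 fin
    by (metis Suc_leI finite_subset numeral_2_eq_2 numeral_3_eq_3)
qed (use x0 in auto)

lemma K_D_self:
  assumes fin: "finite (carrier G)" and ab: "a \<noteq> b" "inv a = a" "inv b = b" "a \<in> carrier G" "b \<in> carrier G"
  shows "vertex_connectivity (carrier G) (delete_edge (non_inverse_adj G) a b) = card (carrier G) - 2"
proof (rule vc_eq[OF fin, of "{a, b}"])
  show "graph_disconnected {a, b} (delete_edge (non_inverse_adj G) a b) \<or> 2 = 1"
    by (rule disjI1, rule disc_isolated[of a _ b]) (use ab in \<open>auto simp: non_inverse_adj_def delete_edge_def\<close>)
  show "\<And>W. W \<subseteq> carrier G \<Longrightarrow> 2 < card W \<Longrightarrow> \<not> graph_disconnected W (delete_edge (non_inverse_adj G) a b)"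
    unfolding graph_disconnected_def using L2 fin ab
    by (metis Suc_leI finite_subset numeral_2_eq_2 numeral_3_eq_3)
qed (use ab in auto)

lemma K_D_non:
  assumes fin: "finite (carrier G)" and ab: "a \<noteq> b" "b \<noteq> inv a" "a \<noteq> inv a" "a \<in> carrier G" "b \<in> carrier G"
  shows "vertex_connectivity (carrier G) (delete_edge (non_inverse_adj G) a b) = card (carrier G) - 3"
proof (rule vc_eq[OF fin, of "{inv a, a, b}"])
  show "graph_disconnected {inv a, a, b} (delete_edge (non_inverse_adj G) a b) \<or> 3 = 1"
    by (rule disjI1, rule disc_isolated[of a _ b]) (use ab in \<open>auto simp: non_inverse_adj_def delete_edge_def\<close>)
  show "\<And>W. W \<subseteq> carrier G \<Longrightarrow> 3 < card W \<Longrightarrow> \<not> graph_disconnected W (delete_edge (non_inverse_adj G) a b)"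
  proof -
    fix W assume W: "W \<subseteq> carrier G" "3 < card W"
    have c4: "4 \<le> card W" using W by simp
    show "\<not> graph_disconnected W (delete_edge (non_inverse_adj G) a b)"
      unfolding graph_disconnected_def using L3[OF W(1) finite_subset[OF W(1) fin] c4] ab by blast
  qed
  show "card {inv a, a, b} = 3" using ab by (auto simp: card_insert_if)
qed (use ab in auto)

end

theorem mainTheorem10:
  fixes G :: "('a, 'b) monoid_scheme"
  assumes "group G" and "finite (carrier G)"
  shows "minimally_connected (carrier G) (non_inverse_adj G) \<longleftrightarrow>
           ((\<forall>x\<in>carrier G. x \<noteq> \<one>\<^bsub>G\<^esub> \<longrightarrow> x = inv\<^bsub>G\<^esub> x) \<or>
            (\<forall>x\<in>carrier G. x \<noteq> \<one>\<^bsub>G\<^esub> \<longrightarrow> x \<noteq> inv\<^bsub>G\<^esub> x))"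
proof -
  interpret group G by (rule assms(1))
  note fin = assms(2)
  let ?N = "non_inverse_adj G"
  let ?n = "card (carrier G)"
  have edge: "a \<noteq> b \<and> b \<noteq> inv\<^bsub>G\<^esub> a \<and> a \<in> carrier G \<and> b \<in> carrier G" if "is_edge (carrier G) ?N a b" for a b
    using that by (auto simp: is_edge_def non_inverse_adj_def)
  have desym: "delete_edge E a b = delete_edge E b a" for E :: "'a \<Rightarrow> 'a \<Rightarrow> bool" and a b
    by (auto simp: delete_edge_def insert_commute fun_eq_iff)
  show ?thesis
  proof
    assume mc: "minimally_connected (carrier G) ?N"
    show "(\<forall>x\<in>carrier G. x \<noteq> \<one>\<^bsub>G\<^esub> \<longrightarrow> x = inv\<^bsub>G\<^esub> x) \<or> (\<forall>x\<in>carrier G. x \<noteq> \<one>\<^bsub>G\<^esub> \<longrightarrow> x \<noteq> inv\<^bsub>G\<^esub> x)"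
    proof (rule ccontr)
      assume "\<not> ?thesis"
      then obtain u v where u: "u \<in> carrier G" "u \<noteq> \<one>\<^bsub>G\<^esub>" "u \<noteq> inv\<^bsub>G\<^esub> u"
        and v: "v \<in> carrier G" "v \<noteq> \<one>\<^bsub>G\<^esub>" "v = inv\<^bsub>G\<^esub> v" by blast
      have e: "is_edge (carrier G) ?N \<one>\<^bsub>G\<^esub> v" using v by (auto simp: is_edge_def non_inverse_adj_def)
      have k1: "vertex_connectivity (carrier G) (delete_edge ?N \<one>\<^bsub>G\<^esub> v) = ?n - 2"
        by (rule K_D_self) (use fin v in auto)
      have k2: "vertex_connectivity (carrier G) ?N = ?n - 2" by (rule K_G_some[OF fin u(1,3)])
      have "inv\<^bsub>G\<^esub> u \<noteq> \<one>\<^bsub>G\<^esub>" "\<one>\<^bsub>G\<^esub> \<noteq> inv\<^bsub>G\<^esub> u" using u by (metis inv_inv inv_one)+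
      then have "card {\<one>\<^bsub>G\<^esub>, u, inv\<^bsub>G\<^esub> u} = 3" using u by (auto simp: card_insert_if)
      moreover have "card {\<one>\<^bsub>G\<^esub>, u, inv\<^bsub>G\<^esub> u} \<le> ?n" using u fin by (intro card_mono) auto
      ultimately have "?n \<ge> 3" by simp
      moreover have "?n - 2 = ?n - 2 - 1" using mc e k1 k2 unfolding minimally_connected_def by metis
      ultimately show False by simp
    qed
  next
    assume rhs: "(\<forall>x\<in>carrier G. x \<noteq> \<one>\<^bsub>G\<^esub> \<longrightarrow> x = inv\<^bsub>G\<^esub> x) \<or> (\<forall>x\<in>carrier G. x \<noteq> \<one>\<^bsub>G\<^esub> \<longrightarrow> x \<noteq> inv\<^bsub>G\<^esub> x)"
    have conn: "graph_connected (carrier G) ?N"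
      unfolding graph_connected_def
    proof (intro conjI ballI)
      show "carrier G \<noteq> {}" by auto
      fix x y assume xy: "x \<in> carrier G" "y \<in> carrier G"
      show "reachable (carrier G) ?N x y"
      proof (cases "x = y \<or> ?N x y")
        case True then show ?thesis using xy by (meson reach_edge reach_refl)
      next
        case False
        then have h: "x \<noteq> y" "y = inv\<^bsub>G\<^esub> x" by (auto simp: non_inverse_adj_def)
        then have "x \<noteq> \<one>\<^bsub>G\<^esub>" by auto
        have "y \<noteq> \<one>\<^bsub>G\<^esub>" using h xy by (metis inv_inv inv_one)
        have "?N x \<one>\<^bsub>G\<^esub>" using \<open>x \<noteq> \<one>\<^bsub>G\<^esub>\<close> xy by (auto simp: non_inverse_adj_def) (metis inv_inv inv_one)
        moreover have "?N \<one>\<^bsub>G\<^esub> y" using \<open>y \<noteq> \<one>\<^bsub>G\<^esub>\<close> by (auto simp: non_inverse_adj_def)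
        ultimately show ?thesis using reach_common xy by (metis one_closed)
      qed
    qed
    show "minimally_connected (carrier G) ?N"
      unfolding minimally_connected_def
    proof (intro conjI allI impI conn)
      fix a b assume ab: "is_edge (carrier G) ?N a b"
      note e = edge[OF ab]
      show "vertex_connectivity (carrier G) (delete_edge ?N a b) = vertex_connectivity (carrier G) ?N - 1"
      proof (cases "\<forall>x\<in>carrier G. x \<noteq> \<one>\<^bsub>G\<^esub> \<longrightarrow> x = inv\<^bsub>G\<^esub> x")
        case True
        then have all: "\<forall>x\<in>carrier G. inv\<^bsub>G\<^esub> x = x" by (metis inv_one)
        have "vertex_connectivity (carrier G) ?N = ?n - 1" by (rule K_G_all[OF fin all])
        moreover have "vertex_connectivity (carrier G) (delete_edge ?N a b) = ?n - 2"
          by (rule K_D_self) (use fin e all in auto)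
        ultimately show ?thesis by simp
      next
        case False
        then obtain x0 where x0: "x0 \<in> carrier G" "x0 \<noteq> inv\<^bsub>G\<^esub> x0" by blast
        have B: "\<forall>x\<in>carrier G. x \<noteq> \<one>\<^bsub>G\<^esub> \<longrightarrow> x \<noteq> inv\<^bsub>G\<^esub> x" using rhs False by blast
        have "vertex_connectivity (carrier G) ?N = ?n - 2" by (rule K_G_some[OF fin x0])
        moreover have "vertex_connectivity (carrier G) (delete_edge ?N a b) = ?n - 3"
        proof (cases "a = \<one>\<^bsub>G\<^esub>")
          case False
          then show ?thesis using K_D_non[OF fin] e B by blast
        next
          case True
          then have "b \<noteq> \<one>\<^bsub>G\<^esub>" using e by auto
          then have "b \<noteq> inv\<^bsub>G\<^esub> b" using B e by blast
          moreover have "a \<noteq> inv\<^bsub>G\<^esub> b" using e inv_eq_swap by blast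
          ultimately show ?thesis using K_D_non[OF fin, of b a] e desym by metis
        qed
        ultimately show ?thesis by simp
      qed
    qed
  qed
qed

end
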